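(* Let $G$ be a simple graph and let $G'$ be a minor of $G$, and let $k$ be an integer with $1\le k<|V(G')|$. Then $F_k(G')$ is a minor of $F_k(G)$.
   Context: For a simple graph $G=(V,E)$ on $n$ vertices and an integer $1\le k<n$, the $k$-token graph $F_k(G)$ is the graph whose vertices are all $k$-element subsets of $V$, two such subsets $A,B$ being adjacent whenever their symmetric difference $A\triangle B$ is a pair $\{a,b\}$ with $a$ adjacent to $b$ in $G$. A graph $H$ is a minor of $G$ if a graph isomorphic to $H$ can be obtained from $G$ by contracting edges, deleting edges, and deleting vertices (contractions producing simple graphs). *)

theory Defs
  imports Main
begin

type_synonym 'a graph = "'a set \<times> 'a set set"

definition verts :: "'a graph \<Rightarrow> 'a set" where
  "verts G = fst G"

definition edges :: "'a graph \<Rightarrow> 'a set set" where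
  "edges G = snd G"

definition simple_graph :: "'a graph \<Rightarrow> bool" where
  "simple_graph G \<longleftrightarrow> finite (verts G) \<and>
     (\<forall>e\<in>edges G. e \<subseteq> verts G \<and> card e = 2)"

definition delete_edge :: "'a set \<Rightarrow> 'a graph \<Rightarrow> 'a graph" where
  "delete_edge e G = (verts G, edges G - {e})"

definition delete_vertex :: "'a \<Rightarrow> 'a graph \<Rightarrow> 'a graph" where
  "delete_vertex v G = (verts G - {v}, {e \<in> edges G. v \<notin> e})"

text \<open>Contract the edge {u,v} into the vertex u (loops and parallel edges are discarded,
  so the result is simple).\<close>
definition contract_edge :: "'a \<Rightarrow> 'a \<Rightarrow> 'a graph \<Rightarrow> 'a graph" where
  "contract_edge u v G = (verts G - {v},
     {e \<in> edges G. v \<notin> e} \<union> {{u, w} | w. {v, w} \<in> edges G \<and> w \<noteq> u})"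

inductive obtainable :: "'a graph \<Rightarrow> 'a graph \<Rightarrow> bool" for G :: "'a graph" where
  refl: "obtainable G G"
| del_edge: "obtainable G H \<Longrightarrow> e \<in> edges H \<Longrightarrow> obtainable G (delete_edge e H)"
| del_vertex: "obtainable G H \<Longrightarrow> v \<in> verts H \<Longrightarrow> obtainable G (delete_vertex v H)"
| contract: "obtainable G H \<Longrightarrow> {u, v} \<in> edges H \<Longrightarrow> u \<noteq> v \<Longrightarrow>
              obtainable G (contract_edge u v H)"

definition graph_iso :: "'a graph \<Rightarrow> 'b graph \<Rightarrow> bool" where
  "graph_iso G H \<longleftrightarrow> simple_graph G \<and> simple_graph H \<and>
     (\<exists>f. bij_betw f (verts G) (verts H) \<and>
        (\<forall>x\<in>verts G. \<forall>y\<in>verts G. {x, y} \<in> edges G \<longleftrightarrow> {f x, f y} \<in> edges H))"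

definition minor :: "'b graph \<Rightarrow> 'a graph \<Rightarrow> bool" where
  "minor H G \<longleftrightarrow> (\<exists>G0. obtainable G G0 \<and> graph_iso H G0)"

definition token_graph :: "nat \<Rightarrow> 'a graph \<Rightarrow> 'a set graph" where
  "token_graph k G =
     ({A. A \<subseteq> verts G \<and> card A = k},
      {{A, B} | A B. A \<subseteq> verts G \<and> card A = k \<and> B \<subseteq> verts G \<and> card B = k \<and>
         (\<exists>a b. (A - B) \<union> (B - A) = {a, b} \<and> {a, b} \<in> edges G)})"

end

theory Submission
  imports Defs
begin


lemma contract_simple:
  assumes s: "simple_graph H" and uv: "{u,v} \<in> edges H" "u \<noteq> v"
  shows "simple_graph (contract_edge u v H)"
proof -
  have uvV: "u \<in> verts H" "v \<in> verts H"
    using s uv by (auto simp: simple_graph_def)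
  have "e \<subseteq> verts H - {v} \<and> card e = 2"
    if e: "e \<in> {e \<in> edges H. v \<notin> e} \<union> {{u, w} |w. {v, w} \<in> edges H \<and> w \<noteq> u}" for e
  proof (cases "e \<in> edges H \<and> v \<notin> e")
    case True then show ?thesis using s by (auto simp: simple_graph_def)
  next
    case False
    then obtain w where w: "e = {u,w}" "{v,w} \<in> edges H" "w \<noteq> u" using e by auto
    have "w \<in> verts H" "card {v,w} = 2" using s w(2) by (auto simp: simple_graph_def)
    then have "w \<noteq> v" by auto
    then show ?thesis using w uvV uv(2) \<open>w \<in> verts H\<close> by auto
  qed
  moreover have "finite (verts H - {v})" using s by (simp add: simple_graph_def)
  ultimately show ?thesis
    unfolding simple_graph_def contract_edge_def verts_def edges_def by simp
qed

lemma simple_del_edge: "simple_graph H \<Longrightarrow> simple_graph (delete_edge e H)"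
  unfolding simple_graph_def delete_edge_def verts_def edges_def by simp

lemma simple_del_vertex: "simple_graph H \<Longrightarrow> simple_graph (delete_vertex v H)"
  unfolding simple_graph_def delete_vertex_def verts_def edges_def by auto

lemma obtainable_simple:
  assumes "obtainable G H" "simple_graph G" shows "simple_graph H"
  using assms(1)
proof (induction rule: obtainable.induct)
  case refl show ?case by (rule assms(2))
next
  case (del_edge H e) show ?case by (rule simple_del_edge[OF del_edge.IH])
next
  case (del_vertex H v) show ?case by (rule simple_del_vertex[OF del_vertex.IH])
next
  case (contract H u v)
  show ?case by (rule contract_simple[OF contract.IH contract.hyps(2,3)])
qed

definition Q :: "('v \<Rightarrow> 'v) \<Rightarrow> 'v graph \<Rightarrow> 'v graph" where
  "Q f H = (f ` verts H, {f ` e | e. e \<in> edges H \<and> card (f ` e) = 2})"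

lemma simple_Q: "simple_graph H \<Longrightarrow> simple_graph (Q f H)"
  by (auto simp: simple_graph_def Q_def verts_def edges_def)

lemma Q_id: assumes "simple_graph H" shows "Q id H = H"
proof -
  have "{id ` e | e. e \<in> edges H \<and> card (id ` e) = 2} = edges H"
    using assms by (auto simp: simple_graph_def)
  then show ?thesis unfolding Q_def by (simp add: verts_def edges_def)
qed

lemma Q_comp:
  assumes "simple_graph H" shows "Q g (Q f H) = Q (g \<circ> f) H"
proof -
  have "card (f ` e) = 2" if "e \<in> edges H" "card (g ` f ` e) = 2" for e
  proof -
    have "finite e" "card e = 2" using assms that by (auto simp: simple_graph_def intro: card_ge_0_finite)
    then have "card (f ` e) \<le> 2" by (metis card_image_le)
    moreover have "card (g ` f ` e) \<le> card (f ` e)" using \<open>finite e\<close> by (simp add: card_image_le)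
    ultimately show ?thesis using that by linarith
  qed
  note * = this
  have "{g ` e' | e'. e' \<in> {f ` e | e. e \<in> edges H \<and> card (f ` e) = 2} \<and> card (g ` e') = 2}
    = {(g \<circ> f) ` e | e. e \<in> edges H \<and> card ((g \<circ> f) ` e) = 2}" (is "?L = ?R")
  proof
    show "?L \<subseteq> ?R" by (auto simp: image_comp)
    show "?R \<subseteq> ?L"
    proof
      fix x assume "x \<in> ?R"
      then obtain e where e: "x = (g \<circ> f) ` e" "e \<in> edges H" "card ((g \<circ> f) ` e) = 2" by auto
      then have "card (f ` e) = 2" using * by (simp add: image_comp)
      then have m: "f ` e \<in> {f ` e | e. e \<in> edges H \<and> card (f ` e) = 2}" using e(2) by blast
      have c: "card (g ` (f ` e)) = 2" using e(3) by (simp add: image_comp)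
      have xx: "x = g ` (f ` e)" using e(1) by (simp add: image_comp)
      show "x \<in> ?L" using m c xx by blast
    qed
  qed
  then show ?thesis
    by (simp add: Q_def verts_def edges_def image_comp)
qed

lemma img_fix: assumes "v \<notin> e" shows "(id(v:=u)) ` e = e"
proof -
  have "\<forall>x\<in>e. (id(v:=u)) x = x" using assms by auto
  then show ?thesis by (simp add: image_cong[of e e "id(v:=u)" id] )
qed

lemma contract_Q:
  assumes "simple_graph H" "u \<in> verts H" "v \<in> verts H" "u \<noteq> v"
  shows "contract_edge u v H = Q (id(v:=u)) H"
proof -
  have V: "verts H - {v} = (id(v:=u)) ` verts H"
  proof
    show "verts H - {v} \<subseteq> (id(v:=u)) ` verts H"
      using img_fix[of v "verts H - {v}" u] by auto
    show "(id(v:=u)) ` verts H \<subseteq> verts H - {v}" using assms by auto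
  qed
  have E: "{e \<in> edges H. v \<notin> e} \<union> {{u, w} |w. {v, w} \<in> edges H \<and> w \<noteq> u}
     = {(id(v:=u)) ` e | e. e \<in> edges H \<and> card ((id(v:=u)) ` e) = 2}" (is "?L = ?R")
  proof
    show "?L \<subseteq> ?R"
    proof
      fix e assume "e \<in> ?L"
      then show "e \<in> ?R"
      proof
        assume "e \<in> {e \<in> edges H. v \<notin> e}"
        then have "e \<in> edges H" "v \<notin> e" by auto
        moreover have "(id(v:=u)) ` e = e" using \<open>v \<notin> e\<close> by (rule img_fix)
        moreover have "card e = 2" using assms(1) \<open>e \<in> edges H\<close> by (auto simp: simple_graph_def)
        ultimately show ?thesis by (metis (mono_tags, lifting) mem_Collect_eq)
      next
        assume "e \<in> {{u, w} |w. {v, w} \<in> edges H \<and> w \<noteq> u}"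
        then obtain w where w: "e = {u,w}" "{v,w} \<in> edges H" "w \<noteq> u" by auto
        have "card {v,w} = 2" using assms(1) w(2) by (auto simp: simple_graph_def)
        then have "w \<noteq> v" by auto
        then have "(id(v:=u)) ` {v,w} = {u,w}" by auto
        moreover have "card {u,w} = 2" using w(3) by auto
        ultimately show ?thesis using w by (metis (mono_tags, lifting) mem_Collect_eq)
      qed
    qed
  next
    show "?R \<subseteq> ?L"
    proof
      fix e' assume "e' \<in> ?R"
      then obtain e where e: "e' = (id(v:=u)) ` e" "e \<in> edges H" "card ((id(v:=u)) ` e) = 2" by auto
      show "e' \<in> ?L"
      proof (cases "v \<in> e")
        case False
        then have "(id(v:=u)) ` e = e" by (rule img_fix)
        then show ?thesis using e False by auto
      next
        case True
        have "card e = 2" using assms(1) e(2) by (auto simp: simple_graph_def)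
        then obtain w where "e = {v,w}" "w \<noteq> v" using True by (auto simp: card_2_iff)
        then have "e' = {u,w}" using e by auto
        then have "card {u,w} = 2" using e(1,3) by simp
        then have "w \<noteq> u" by auto
        then show ?thesis using \<open>e' = {u,w}\<close> \<open>e = {v,w}\<close> e(2) by auto
      qed
    qed
  qed
  show ?thesis by (simp only: contract_edge_def Q_def V E)
qed

lemma contract_many:
  assumes "finite S" "obtainable H0 H" "simple_graph H"
    "\<forall>x\<in>S. x \<in> verts H \<and> f x \<notin> S \<and> f x \<in> verts H \<and> {x, f x} \<in> edges H \<and> f x \<noteq> x"
    "\<forall>x. x \<notin> S \<longrightarrow> f x = x"
  shows "obtainable H0 (Q f H)"
  using assms(1,4,5)
proof (induction S arbitrary: f rule: finite_induct)
  case empty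
  then have "f = id" by auto
  then show ?case using Q_id[OF assms(3)] assms(2) by metis
next
  case (insert x S f)
  define g where "g = f(x:=x)"
  have fx: "f x \<notin> insert x S" "f x \<in> verts H" "{x, f x} \<in> edges H" "x \<in> verts H"
    using insert.prems(1) by auto
  have gS: "\<forall>y\<in>S. y \<in> verts H \<and> g y \<notin> S \<and> g y \<in> verts H \<and> {y, g y} \<in> edges H \<and> g y \<noteq> y"
  proof
    fix y assume y: "y \<in> S"
    then have "y \<noteq> x" using insert.hyps(2) by auto
    then have "g y = f y" by (simp add: g_def)
    then show "y \<in> verts H \<and> g y \<notin> S \<and> g y \<in> verts H \<and> {y, g y} \<in> edges H \<and> g y \<noteq> y"
      using insert.prems(1) y by auto
  qed
  have gn: "\<forall>y. y \<notin> S \<longrightarrow> g y = y"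
    using insert.prems(2) by (simp add: g_def)
  have "obtainable H0 (Q g H)" using insert.IH[OF gS gn] .
  define h where "h = id(x := f x)"
  have fg: "f = h \<circ> g"
  proof
    fix y show "f y = (h \<circ> g) y"
    proof (cases "y = x")
      case True then show ?thesis by (simp add: g_def h_def)
    next
      case False
      have "f y \<noteq> x"
      proof (cases "y \<in> insert x S")
        case True then show ?thesis using insert.prems(1) by auto
      next
        case False then show ?thesis using insert.prems(2) \<open>y \<noteq> x\<close> by auto
      qed
      then show ?thesis using False by (simp add: g_def h_def)
    qed
  qed
  have gfx: "g (f x) = f x" using fx(1) insert.prems(2) by (simp add: g_def)
  have gx: "g x = x" by (simp add: g_def)
  have sg: "simple_graph (Q g H)" using simple_Q assms(3) .
  have "x \<in> g ` verts H" using fx(4) gx by (metis image_eqI)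
  moreover have "f x \<in> g ` verts H" using fx(2) gfx by (metis image_eqI)
  ultimately have vx: "x \<in> verts (Q g H)" "f x \<in> verts (Q g H)" by (simp_all add: Q_def verts_def)
  have ge: "g ` {x, f x} = {x, f x}" using gfx gx by simp
  have c: "card (g ` {x, f x}) = 2" using fx(1) ge by auto
  have "{f x, x} = g ` {x, f x}" using ge by (simp add: insert_commute)
  then have "{f x, x} \<in> {g ` e | e. e \<in> edges H \<and> card (g ` e) = 2}" using fx(3) c by blast
  then have ed: "{f x, x} \<in> edges (Q g H)" by (simp add: Q_def edges_def)
  have "Q f H = Q h (Q g H)" using fg Q_comp[OF assms(3)] by simp
  also have "\<dots> = contract_edge (f x) x (Q g H)"
    using contract_Q[OF sg vx(2) vx(1)] fx(1) by (simp add: h_def)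
  finally show ?case
    using obtainable.contract[OF \<open>obtainable H0 (Q g H)\<close> ed] fx(1) by auto
qed

lemma delete_verts:
  assumes "finite D" "D \<subseteq> verts H" "obtainable H0 H"
  shows "obtainable H0 (verts H - D, {e \<in> edges H. e \<inter> D = {}})"
  using assms(1,2)
proof (induction D rule: finite_induct)
  case empty
  then show ?case using assms(3) by (simp add: verts_def edges_def)
next
  case (insert x D)
  let ?H1 = "(verts H - D, {e \<in> edges H. e \<inter> D = {}})"
  have "obtainable H0 ?H1" using insert by auto
  moreover have "x \<in> verts ?H1" using insert by (auto simp: verts_def)
  ultimately have "obtainable H0 (delete_vertex x ?H1)" by (rule obtainable.del_vertex)
  moreover have "delete_vertex x ?H1 = (verts H - insert x D, {e \<in> edges H. e \<inter> insert x D = {}})"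
  proof -
    have 1: "verts H - D - {x} = verts H - insert x D" by blast
    have 2: "{e \<in> {e \<in> edges H. e \<inter> D = {}}. x \<notin> e} = {e \<in> edges H. e \<inter> insert x D = {}}" by blast
    show ?thesis using 1 2 unfolding delete_vertex_def verts_def edges_def by simp
  qed
  ultimately show ?case by simp
qed

lemma delete_edges:
  assumes "finite F" "obtainable H0 H"
  shows "obtainable H0 (verts H, edges H - F)"
  using assms(1)
proof (induction F rule: finite_induct)
  case empty
  then show ?case using assms(2) by (simp add: verts_def edges_def)
next
  case (insert y F)
  show ?case
  proof (cases "y \<in> edges H - F")
    case True
    then have "y \<in> edges (verts H, edges H - F)" by (simp add: edges_def)
    from obtainable.del_edge[OF insert.IH this]
    have "obtainable H0 (delete_edge y (verts H, edges H - F))" .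
    moreover have "edges H - F - {y} = edges H - insert y F" by blast
    ultimately show ?thesis unfolding delete_edge_def verts_def edges_def by simp
  next
    case False
    then have "edges H - insert y F = edges H - F" by auto
    then show ?thesis using insert.IH by simp
  qed
qed

lemma spanning_sub:
  assumes "obtainable X T" "simple_graph T" "verts T' = verts T" "edges T' \<subseteq> edges T"
  shows "obtainable X T'"
proof -
  have "edges T \<subseteq> Pow (verts T)" using assms(2) by (auto simp: simple_graph_def)
  moreover have "finite (verts T)" using assms(2) by (simp add: simple_graph_def)
  ultimately have "finite (edges T)" by (meson finite_Pow_iff finite_subset)
  then have "obtainable X (verts T, edges T - (edges T - edges T'))"
    using delete_edges assms(1) by blast
  moreover have "edges T - (edges T - edges T') = edges T'" using assms(4) by auto
  moreover have "(verts T, edges T') = T'" using assms(3) unfolding verts_def edges_def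
    by (metis prod.collapse)
  ultimately show ?thesis by simp
qed



definition adj2 :: "'a set set \<Rightarrow> 'a set \<Rightarrow> 'a set \<Rightarrow> bool" where
  "adj2 E A B \<longleftrightarrow> (\<exists>C a b. A = insert a C \<and> B = insert b C \<and> a \<notin> C \<and> b \<notin> C \<and> {a,b} \<in> E)"

lemma adj2_sym: assumes "adj2 E A B" shows "adj2 E B A"
proof -
  obtain C a b where h: "A = insert a C" "B = insert b C" "a \<notin> C" "b \<notin> C" "{a,b} \<in> E"
    using assms unfolding adj2_def by blast
  have "{b,a} \<in> E" using h(5) by (simp add: insert_commute)
  then show ?thesis unfolding adj2_def using h by blast
qed

lemma adj_char:
  assumes "finite A" "finite B" "card A = card B" "\<forall>e\<in>E. card e = 2"
  shows "(\<exists>a b. (A - B) \<union> (B - A) = {a,b} \<and> {a,b} \<in> E) \<longleftrightarrow> adj2 E A B"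
proof
  assume "\<exists>a b. (A - B) \<union> (B - A) = {a,b} \<and> {a,b} \<in> E"
  then obtain a b where ab: "(A - B) \<union> (B - A) = {a,b}" "{a,b} \<in> E" by blast
  have "a \<noteq> b" using ab(2) assms(4) by fastforce
  have cP: "card (A - B) = card A - card (A \<inter> B)"
    using assms(1) by (simp add: card_Diff_subset_Int)
  have cR: "card (B - A) = card B - card (A \<inter> B)"
    using assms(2) by (metis card_Diff_subset_Int finite_Int inf_commute)
  have "card (A \<inter> B) \<le> card A" using assms(1) by (simp add: card_mono)
  then have eq: "card (A - B) = card (B - A)" using cP cR assms(3) by simp
  have "card ((A - B) \<union> (B - A)) = card (A - B) + card (B - A)"
    using assms(1,2) by (intro card_Un_disjoint) auto
  then have "card (A - B) + card (B - A) = 2" using ab(1) \<open>a \<noteq> b\<close> by simp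
  then have "card (A - B) = 1" "card (B - A) = 1" using eq by auto
  then obtain x y where x: "A - B = {x}" and y: "B - A = {y}" by (meson card_1_singletonE)
  have "{y,x} = {a,b}" using ab(1) x y by simp
  then have xy: "{x,y} = {a,b}" by (metis insert_commute)
  define C where "C = A \<inter> B"
  have "A = insert x C" using x unfolding C_def by blast
  moreover have "B = insert y C" using y unfolding C_def by blast
  moreover have "x \<notin> C" "y \<notin> C" using x y unfolding C_def by blast+
  ultimately show "adj2 E A B" unfolding adj2_def using xy ab(2) by metis
next
  assume "adj2 E A B"
  then obtain C a b where h: "A = insert a C" "B = insert b C" "a \<notin> C" "b \<notin> C" "{a,b} \<in> E"
    unfolding adj2_def by blast
  have "a \<noteq> b" using h(5) assms(4) by fastforce
  then have "(A - B) \<union> (B - A) = {a,b}" using h by blast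
  then show "\<exists>a b. (A - B) \<union> (B - A) = {a,b} \<and> {a,b} \<in> E" using h(5) by blast
qed

lemma tok_verts: "verts (token_graph k H) = {A. A \<subseteq> verts H \<and> card A = k}"
  by (simp add: token_graph_def verts_def)

lemma tok_edges_mem:
  assumes "simple_graph H"
  shows "X \<in> edges (token_graph k H) \<longleftrightarrow>
    (\<exists>A B. X = {A,B} \<and> A \<subseteq> verts H \<and> card A = k \<and> B \<subseteq> verts H \<and> card B = k \<and> adj2 (edges H) A B)"
proof -
  have fin: "finite (verts H)" and c2: "\<forall>e\<in>edges H. card e = 2"
    using assms by (auto simp: simple_graph_def)
  have "(\<exists>a b. (A - B) \<union> (B - A) = {a,b} \<and> {a,b} \<in> edges H) \<longleftrightarrow> adj2 (edges H) A B"
    if "A \<subseteq> verts H" "card A = k" "B \<subseteq> verts H" "card B = k" for A B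
    using adj_char[of A B "edges H"] that fin c2 finite_subset by metis
  note eq = this
  have m: "X \<in> edges (token_graph k H) \<longleftrightarrow> (\<exists>A B. X = {A,B} \<and> A \<subseteq> verts H \<and> card A = k \<and> B \<subseteq> verts H \<and> card B = k \<and>
         (\<exists>a b. (A - B) \<union> (B - A) = {a, b} \<and> {a, b} \<in> edges H))"
    unfolding token_graph_def edges_def snd_conv mem_Collect_eq by blast
  show ?thesis
  proof
    assume "X \<in> edges (token_graph k H)"
    then obtain A B where h: "X = {A,B}" "A \<subseteq> verts H" "card A = k" "B \<subseteq> verts H" "card B = k"
         "(\<exists>a b. (A - B) \<union> (B - A) = {a, b} \<and> {a, b} \<in> edges H)" using m by blast
    then have "adj2 (edges H) A B" using eq by blast
    then show "\<exists>A B. X = {A,B} \<and> A \<subseteq> verts H \<and> card A = k \<and> B \<subseteq> verts H \<and> card B = k \<and> adj2 (edges H) A B"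
      using h by blast
  next
    assume "\<exists>A B. X = {A,B} \<and> A \<subseteq> verts H \<and> card A = k \<and> B \<subseteq> verts H \<and> card B = k \<and> adj2 (edges H) A B"
    then obtain A B where h: "X = {A,B}" "A \<subseteq> verts H" "card A = k" "B \<subseteq> verts H" "card B = k"
         "adj2 (edges H) A B" by blast
    then have "(\<exists>a b. (A - B) \<union> (B - A) = {a, b} \<and> {a, b} \<in> edges H)" using eq by blast
    then show "X \<in> edges (token_graph k H)" using m h by blast
  qed
qed

lemma tok_edgeE:
  assumes "simple_graph H" "X \<in> edges (token_graph k H)"
  obtains A B where "X = {A,B}" "A \<subseteq> verts H" "card A = k" "B \<subseteq> verts H" "card B = k" "adj2 (edges H) A B"
proof -
  have "\<exists>A B. X = {A,B} \<and> A \<subseteq> verts H \<and> card A = k \<and> B \<subseteq> verts H \<and> card B = k \<and> adj2 (edges H) A B"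
    using assms(2) tok_edges_mem[OF assms(1)] by (rule iffD1[rotated])
  then show ?thesis using that by (elim exE conjE)
qed

lemma tok_edgeI:
  assumes "simple_graph H" "A \<subseteq> verts H" "card A = k" "B \<subseteq> verts H" "card B = k" "adj2 (edges H) A B"
  shows "{A,B} \<in> edges (token_graph k H)"
  apply (subst tok_edges_mem[OF assms(1)])
  apply (rule exI[of _ A], rule exI[of _ B])
  using assms by simp

lemma adj2_neq: assumes "adj2 E A B" "\<forall>e\<in>E. card e = 2" shows "A \<noteq> B"
proof -
  obtain C a b where h: "A = insert a C" "B = insert b C" "a \<notin> C" "b \<notin> C" "{a,b} \<in> E"
    using assms unfolding adj2_def by blast
  have "card {a,b} = 2" using h(5) assms(2) by blast
  then have "a \<noteq> b" by auto
  then have "a \<in> A" "a \<notin> B" using h by auto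
  then show ?thesis by blast
qed

lemma tok_simple:
  assumes "simple_graph H" shows "simple_graph (token_graph k H)"
proof -
  have fin: "finite (verts H)" and c2: "\<forall>e\<in>edges H. card e = 2"
    using assms by (auto simp: simple_graph_def)
  have "{A. A \<subseteq> verts H \<and> card A = k} \<subseteq> Pow (verts H)" by auto
  then have "finite (verts (token_graph k H))" unfolding tok_verts
    using fin by (meson finite_Pow_iff finite_subset)
  moreover have "X \<subseteq> verts (token_graph k H) \<and> card X = 2" if X: "X \<in> edges (token_graph k H)" for X
  proof -
    obtain A B where h: "X = {A,B}" "A \<subseteq> verts H" "card A = k" "B \<subseteq> verts H" "card B = k" "adj2 (edges H) A B"
      by (rule tok_edgeE[OF assms(1) X])
    have "A \<noteq> B" using adj2_neq h(6) c2 by blast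
    then have "card X = 2" using h(1) by simp
    moreover have "X \<subseteq> verts (token_graph k H)" using h(1-5) by (simp add: tok_verts)
    ultimately show ?thesis by blast
  qed
  ultimately show ?thesis unfolding simple_graph_def by blast
qed

lemma adj2_mono: "adj2 E A B \<Longrightarrow> E \<subseteq> E' \<Longrightarrow> adj2 E' A B"
  unfolding adj2_def by blast

lemma tok_del_edge:
  assumes "simple_graph H"
  shows "verts (token_graph k (delete_edge e H)) = verts (token_graph k H)"
    "edges (token_graph k (delete_edge e H)) \<subseteq> edges (token_graph k H)"
proof -
  show "verts (token_graph k (delete_edge e H)) = verts (token_graph k H)"
    unfolding tok_verts by (simp add: delete_edge_def verts_def)
  have s: "simple_graph (delete_edge e H)" using simple_del_edge[OF assms] .
  have E: "edges (delete_edge e H) \<subseteq> edges H" "verts (delete_edge e H) = verts H"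
    by (simp_all add: delete_edge_def edges_def verts_def Diff_subset)
  show "edges (token_graph k (delete_edge e H)) \<subseteq> edges (token_graph k H)"
  proof
    fix X assume "X \<in> edges (token_graph k (delete_edge e H))"
    then obtain A B where h: "X = {A,B}" "A \<subseteq> verts H" "card A = k" "B \<subseteq> verts H" "card B = k"
        "adj2 (edges (delete_edge e H)) A B"
      using tok_edgeE[OF s] E(2) by metis
    have "adj2 (edges H) A B" using adj2_mono[OF h(6) E(1)] .
    then show "X \<in> edges (token_graph k H)" using tok_edgeI[OF assms(1)] h by simp
  qed
qed

lemma tok_del_vertex:
  fixes v :: 'a and k :: nat and H :: "'a graph"
  assumes "simple_graph H"
  defines "D \<equiv> {A \<in> verts (token_graph k H). v \<in> A}"
  shows "token_graph k (delete_vertex v H) =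
     (verts (token_graph k H) - D, {X \<in> edges (token_graph k H). X \<inter> D = {}})"
proof -
  have s: "simple_graph (delete_vertex v H)" using simple_del_vertex[OF assms(1)] .
  have V: "verts (delete_vertex v H) = verts H - {v}" and E: "edges (delete_vertex v H) = {e \<in> edges H. v \<notin> e}"
    by (auto simp: delete_vertex_def edges_def verts_def)
  have 1: "verts (token_graph k (delete_vertex v H)) = verts (token_graph k H) - D"
    unfolding tok_verts V D_def by auto
  have 2: "edges (token_graph k (delete_vertex v H)) = {X \<in> edges (token_graph k H). X \<inter> D = {}}"
  proof
    show "edges (token_graph k (delete_vertex v H)) \<subseteq> {X \<in> edges (token_graph k H). X \<inter> D = {}}"
    proof
      fix X assume "X \<in> edges (token_graph k (delete_vertex v H))"
      then obtain A B where h: "X = {A,B}" "A \<subseteq> verts H - {v}" "card A = k" "B \<subseteq> verts H - {v}" "card B = k"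
          "adj2 {e \<in> edges H. v \<notin> e} A B"
        using tok_edgeE[OF s] V E by metis
      have "adj2 (edges H) A B" using h(6) adj2_mono by blast
      moreover have "A \<subseteq> verts H" "B \<subseteq> verts H" using h by auto
      ultimately have "X \<in> edges (token_graph k H)" using tok_edgeI[OF assms(1), of A k B] h by simp
      moreover have "X \<inter> D = {}" using h unfolding D_def by auto
      ultimately show "X \<in> {X \<in> edges (token_graph k H). X \<inter> D = {}}" by blast
    qed
  next
    show "{X \<in> edges (token_graph k H). X \<inter> D = {}} \<subseteq> edges (token_graph k (delete_vertex v H))"
    proof
      fix X assume X: "X \<in> {X \<in> edges (token_graph k H). X \<inter> D = {}}"
      then obtain A B where h: "X = {A,B}" "A \<subseteq> verts H" "card A = k" "B \<subseteq> verts H" "card B = k"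
          "adj2 (edges H) A B"
        using tok_edgeE[OF assms(1)] X by blast
      have "A \<notin> D" "B \<notin> D" using X h(1) by auto
      then have vA: "v \<notin> A" "v \<notin> B" using h unfolding D_def tok_verts by auto
      then have "adj2 {e \<in> edges H. v \<notin> e} A B" using h(6) unfolding adj2_def by blast
      moreover have "A \<subseteq> verts (delete_vertex v H)" "B \<subseteq> verts (delete_vertex v H)" using V h vA by auto
      ultimately show "X \<in> edges (token_graph k (delete_vertex v H))"
        using tok_edgeI[OF s, of A k B] E h by simp
    qed
  qed
  show ?thesis using 1 2 by (metis verts_def edges_def prod.collapse)
qed



lemma adj2I: "a \<notin> C \<Longrightarrow> b \<notin> C \<Longrightarrow> {a,b} \<in> E \<Longrightarrow> adj2 E (insert a C) (insert b C)"
  unfolding adj2_def by blast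

lemma tok_contract:
  fixes u v :: 'a and k :: nat and H :: "'a graph"
  assumes s: "simple_graph H" and uv: "{u,v} \<in> edges H" and une: "u \<noteq> v"
  defines "T \<equiv> token_graph k H"
  defines "D \<equiv> {A \<in> verts T. u \<in> A \<and> v \<in> A}"
  defines "H1 \<equiv> (verts T - D, {X \<in> edges T. X \<inter> D = {}})"
  defines "f \<equiv> (\<lambda>A. if v \<in> A \<and> u \<notin> A then insert u (A - {v}) else A)"
  shows "token_graph k (contract_edge u v H) = Q f H1"
proof -
  define Hc where "Hc = contract_edge u v H"
  have sc: "simple_graph Hc" unfolding Hc_def using contract_simple[OF s uv une] .
  have fin: "finite (verts H)" and c2: "\<forall>e\<in>edges H. card e = 2"
    using s by (auto simp: simple_graph_def)
  have c2c: "\<forall>e\<in>edges Hc. card e = 2" using sc by (auto simp: simple_graph_def)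
  have uV: "u \<in> verts H" "v \<in> verts H" using s uv by (auto simp: simple_graph_def)
  have Vc: "verts Hc = verts H - {v}" by (simp add: Hc_def contract_edge_def verts_def)
  have Ec: "edges Hc = {e \<in> edges H. v \<notin> e} \<union> {{u, w} |w. {v, w} \<in> edges H \<and> w \<noteq> u}"
    by (simp add: Hc_def contract_edge_def edges_def)
  have VQ: "verts (Q f H1) = f ` (verts T - D)" by (simp add: Q_def H1_def verts_def)
  have EQ: "edges (Q f H1) = {f ` Y | Y. Y \<in> {X \<in> edges T. X \<inter> D = {}} \<and> card (f ` Y) = 2}"
    by (simp add: Q_def H1_def edges_def)
  have memQ: "Z \<in> edges (Q f H1)" if "Y \<in> edges T" "Y \<inter> D = {}" "card (f ` Y) = 2" "Z = f ` Y" for Y Z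
    unfolding EQ mem_Collect_eq by (rule exI[of _ Y]) (use that in simp)
  have VT: "verts T = {A. A \<subseteq> verts H \<and> card A = k}" unfolding T_def by (rule tok_verts)
  have fV: "f A \<subseteq> verts H - {v} \<and> card (f A) = k"
    if "A \<subseteq> verts H" "card A = k" "\<not> (u \<in> A \<and> v \<in> A)" for A
  proof (cases "v \<in> A \<and> u \<notin> A")
    case True
    have fA: "f A = insert u (A - {v})" using True by (simp add: f_def)
    have finA: "finite A" using that(1) fin finite_subset by blast
    have "card (A - {v}) = k - 1" using True that(2) finA by simp
    moreover have "k \<ge> 1" using True finA that(2) by (metis card_0_eq empty_iff less_one not_less)
    moreover have "u \<notin> A - {v}" using True by simp
    ultimately have "card (f A) = k" unfolding fA using finA by simp
    moreover have "f A \<subseteq> verts H - {v}" unfolding fA using that(1) uV une by auto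
    ultimately show ?thesis by simp
  next
    case False
    then have "f A = A" unfolding f_def by (rule if_not_P)
    moreover have "v \<notin> A" using False that(3) by blast
    ultimately show ?thesis using that by auto
  qed
  have 1: "verts (token_graph k Hc) = verts (Q f H1)"
  proof
    show "verts (token_graph k Hc) \<subseteq> verts (Q f H1)"
    proof
      fix A assume "A \<in> verts (token_graph k Hc)"
      then have A: "A \<subseteq> verts H - {v}" "card A = k" unfolding tok_verts Vc by auto
      then have "A \<in> verts T - D" unfolding VT D_def by auto
      moreover have "f A = A" using A by (auto simp: f_def)
      ultimately show "A \<in> verts (Q f H1)" unfolding VQ by (metis image_eqI)
    qed
  next
    show "verts (Q f H1) \<subseteq> verts (token_graph k Hc)"
    proof
      fix B assume "B \<in> verts (Q f H1)"
      then obtain A where A: "B = f A" "A \<in> verts T - D" unfolding VQ by blast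
      then have "A \<subseteq> verts H" "card A = k" "\<not> (u \<in> A \<and> v \<in> A)" unfolding VT D_def by auto
      then show "B \<in> verts (token_graph k Hc)" using fV A(1) unfolding tok_verts Vc by auto
    qed
  qed
  have side: "adj2 (edges Hc) (f A) (f B)"
    if h: "A \<subseteq> verts H" "B \<subseteq> verts H" "\<not> (u \<in> A \<and> v \<in> A)" "\<not> (u \<in> B \<and> v \<in> B)"
      "adj2 (edges H) A B" "f A \<noteq> f B" "v \<in> A" "v \<notin> B" for A B
  proof -
    obtain C a b where ab: "A = insert a C" "B = insert b C" "a \<notin> C" "b \<notin> C" "{a,b} \<in> edges H"
      using h(5) unfolding adj2_def by blast
    have "v \<notin> C" using h(8) ab(2) by blast
    then have "a = v" using h(7) ab(1) by blast
    have "u \<notin> A" using h(3,7) by blast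
    then have "u \<notin> C" using ab(1) by blast
    have fA: "f A = insert u C" using h(7) \<open>u \<notin> A\<close> ab(1) \<open>a = v\<close> \<open>v \<notin> C\<close> unfolding f_def by auto
    have fB: "f B = B" using h(8) unfolding f_def by simp
    have "b \<noteq> u" using h(6) fA fB ab(2) by auto
    have "{v,b} \<in> edges H" using ab(5) \<open>a = v\<close> by simp
    then have "{u,b} \<in> {{u, w} |w. {v, w} \<in> edges H \<and> w \<noteq> u}" using \<open>b \<noteq> u\<close> by blast
    then have "{u,b} \<in> edges Hc" unfolding Ec by (rule UnI2)
    then have "adj2 (edges Hc) (insert u C) (insert b C)" using \<open>u \<notin> C\<close> ab(4) by (rule adj2I[rotated 2])
    then show ?thesis using fA fB ab(2) by simp
  qed
  have fwd: "adj2 (edges Hc) (f A) (f B)"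
    if h: "A \<subseteq> verts H" "B \<subseteq> verts H" "\<not> (u \<in> A \<and> v \<in> A)" "\<not> (u \<in> B \<and> v \<in> B)"
      "adj2 (edges H) A B" "f A \<noteq> f B" for A B
  proof -
    obtain C a b where ab: "A = insert a C" "B = insert b C" "a \<notin> C" "b \<notin> C" "{a,b} \<in> edges H"
      using h(5) unfolding adj2_def by blast
    have "card {a,b} = 2" using ab(5) c2 by blast
    then have "a \<noteq> b" by auto
    consider "v \<in> A" "v \<notin> B" | "v \<notin> A" "v \<in> B" | "v \<notin> A" "v \<notin> B" | "v \<in> A" "v \<in> B" by blast
    then show ?thesis
    proof cases
      case 1 then show ?thesis using side h by blast
    next
      case 2
      have "adj2 (edges Hc) (f B) (f A)"
        using side[OF h(2,1,4,3) adj2_sym[OF h(5)]] h(6) 2 by metis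
      then show ?thesis by (rule adj2_sym)
    next
      case 3
      then have "f A = A" "f B = B" unfolding f_def by simp_all
      moreover have "v \<noteq> a" "v \<noteq> b" using 3 ab by auto
      then have "{a,b} \<in> edges Hc" unfolding Ec using ab(5) by auto
      ultimately show ?thesis using ab adj2I by metis
    next
      case 4
      have "u \<notin> A" "u \<notin> B" using 4 h(3,4) by auto
      have "v \<noteq> a"
      proof
        assume "v = a"
        then have "v \<notin> C" using ab(3) by simp
        then have "v = b" using 4 ab(2) by blast
        then show False using \<open>v = a\<close> \<open>a \<noteq> b\<close> by simp
      qed
      have "v \<noteq> b"
      proof
        assume "v = b"
        then have "v \<notin> C" using ab(4) by simp
        then have "v = a" using 4 ab(1) by blast
        then show False using \<open>v = b\<close> \<open>a \<noteq> b\<close> by simp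
      qed
      have vC: "v \<in> C" using 4 ab(1) \<open>v \<noteq> a\<close> by blast
      have uC: "u \<noteq> a" "u \<noteq> b" "u \<notin> C" using \<open>u \<notin> A\<close> \<open>u \<notin> B\<close> ab by auto
      define C' where "C' = insert u (C - {v})"
      have fA: "f A = insert a C'" using 4 \<open>u \<notin> A\<close> ab(1) \<open>v \<noteq> a\<close> unfolding f_def C'_def by auto
      have fB: "f B = insert b C'" using 4 \<open>u \<notin> B\<close> ab(2) \<open>v \<noteq> b\<close> unfolding f_def C'_def by auto
      have "a \<notin> C'" "b \<notin> C'" using uC ab(3,4) unfolding C'_def by auto
      moreover have "{a,b} \<in> edges Hc" unfolding Ec using ab(5) \<open>v \<noteq> a\<close> \<open>v \<noteq> b\<close> by auto
      ultimately show ?thesis unfolding fA fB by (rule adj2I)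
    qed
  qed
  have bwd: "{A,B} \<in> edges (Q f H1)"
    if h: "A \<subseteq> verts H - {v}" "B \<subseteq> verts H - {v}" "card A = k" "card B = k"
      "A = insert u C" "B = insert w C" "u \<notin> C" "w \<notin> C" "{v,w} \<in> edges H" "w \<noteq> u" for A B C w
  proof -
    define A' where "A' = insert v C"
    have vC: "v \<notin> C" using h(1,5) by blast
    have finA: "finite A" using h(1) fin finite_subset by blast
    have "card A' = k" unfolding A'_def using h(3,5,7) vC finA by (simp add: card_insert_if)
    moreover have "A' \<subseteq> verts H" unfolding A'_def using h(1,5) uV by auto
    moreover have "adj2 (edges H) A' B" unfolding A'_def h(6) using vC h(8,9) by (rule adj2I)
    ultimately have Y: "{A',B} \<in> edges T" unfolding T_def using tok_edgeI[OF s] h(2,4) by blast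
    have "u \<notin> A'" unfolding A'_def using h(7) une by auto
    moreover have "v \<notin> B" using h(2) by auto
    ultimately have YD: "{A',B} \<inter> D = {}" unfolding D_def by auto
    have fA': "f A' = A" unfolding f_def A'_def using h(5,7) vC une by auto
    have fB: "f B = B" using \<open>v \<notin> B\<close> unfolding f_def by simp
    have "adj2 (edges Hc) A B"
    proof -
      have "{u,w} \<in> {{u, w} |w. {v, w} \<in> edges H \<and> w \<noteq> u}" using h(9,10) by blast
      then have "{u,w} \<in> edges Hc" unfolding Ec by (rule UnI2)
      then show ?thesis unfolding h(5,6) using h(7,8) by (rule adj2I[rotated 2])
    qed
    then have "A \<noteq> B" using adj2_neq c2c by blast
    then have "card (f ` {A',B}) = 2" using fA' fB by simp
    then show ?thesis using memQ[OF Y YD] fA' fB by simp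
  qed
  have 2: "edges (token_graph k Hc) = edges (Q f H1)"
  proof
    show "edges (token_graph k Hc) \<subseteq> edges (Q f H1)"
    proof
      fix X assume "X \<in> edges (token_graph k Hc)"
      then obtain A B where h: "X = {A,B}" "A \<subseteq> verts Hc" "card A = k" "B \<subseteq> verts Hc" "card B = k"
          "adj2 (edges Hc) A B"
        by (rule tok_edgeE[OF sc])
      obtain C a b where ab: "A = insert a C" "B = insert b C" "a \<notin> C" "b \<notin> C" "{a,b} \<in> edges Hc"
        using h(6) unfolding adj2_def by blast
      have AV: "A \<subseteq> verts H - {v}" "B \<subseteq> verts H - {v}" using h(2,4) Vc by auto
      show "X \<in> edges (Q f H1)"
      proof (cases "{a,b} \<in> edges H \<and> v \<notin> {a,b}")
        case True
        have Y: "{A,B} \<in> edges T"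
        proof -
          have "adj2 (edges H) A B" unfolding ab(1,2) using ab(3,4) True by (intro adj2I) auto
          moreover have "A \<subseteq> verts H" "B \<subseteq> verts H" using AV by auto
          ultimately show ?thesis using tok_edgeI[OF s, of A k B] h(3,5) by (simp add: T_def)
        qed
        have YD: "{A,B} \<inter> D = {}" using AV unfolding D_def by auto
        have fA: "f A = A" "f B = B" using AV unfolding f_def by auto
        have "A \<noteq> B" using adj2_neq h(6) c2c by blast
        then have "card (f ` {A,B}) = 2" using fA by simp
        then show ?thesis using memQ[OF Y YD] fA h(1) by simp
      next
        case False
        then obtain w where w: "{a,b} = {u,w}" "{v,w} \<in> edges H" "w \<noteq> u" using ab(5) unfolding Ec by auto
        then consider "a = u" "b = w" | "a = w" "b = u" by (auto simp: doubleton_eq_iff)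
        then show ?thesis
        proof cases
          case 1
          then show ?thesis using bwd[OF AV h(3,5)] ab w h(1) by blast
        next
          case 2
          have "{B,A} \<in> edges (Q f H1)" using bwd[OF AV(2,1) h(5,3)] ab w 2 by blast
          then show ?thesis using h(1) by (simp add: insert_commute)
        qed
      qed
    qed
  next
    show "edges (Q f H1) \<subseteq> edges (token_graph k Hc)"
    proof
      fix Z assume "Z \<in> edges (Q f H1)"
      then obtain Y where Y: "Z = f ` Y" "Y \<in> edges T" "Y \<inter> D = {}" "card (f ` Y) = 2"
        unfolding EQ mem_Collect_eq by (elim exE conjE)
      obtain A B where h: "Y = {A,B}" "A \<subseteq> verts H" "card A = k" "B \<subseteq> verts H" "card B = k"
          "adj2 (edges H) A B"
        by (rule tok_edgeE[OF s Y(2)[unfolded T_def]])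
      have nD: "\<not> (u \<in> A \<and> v \<in> A)" "\<not> (u \<in> B \<and> v \<in> B)"
        using Y(3) h unfolding D_def VT by auto
      have "f A \<noteq> f B" using Y(4) h(1) by auto
      then have adj: "adj2 (edges Hc) (f A) (f B)" using fwd h(2,4,6) nD by blast
      have "f A \<subseteq> verts Hc" "card (f A) = k" "f B \<subseteq> verts Hc" "card (f B) = k"
        using fV h(2-5) nD Vc by auto
      then have "{f A, f B} \<in> edges (token_graph k Hc)" using tok_edgeI[OF sc] adj by blast
      then show "Z \<in> edges (token_graph k Hc)" using Y(1) h(1) by simp
    qed
  qed
  show ?thesis using 1 2 unfolding Hc_def verts_def edges_def by (simp add: prod_eq_iff)
qed



lemma Q_cong:
  assumes "simple_graph H" "\<forall>x\<in>verts H. f x = g x"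
  shows "Q f H = Q g H"
proof -
  have ev: "f ` e = g ` e" if "e \<in> edges H" for e
  proof -
    have "e \<subseteq> verts H" using assms(1) that by (simp add: simple_graph_def)
    then show ?thesis using assms(2) by (intro image_cong[OF HOL.refl]) blast
  qed
  have 1: "f ` verts H = g ` verts H" using assms(2) by (intro image_cong[OF HOL.refl]) blast
  have 2: "{f ` e |e. e \<in> edges H \<and> card (f ` e) = 2} = {g ` e |e. e \<in> edges H \<and> card (g ` e) = 2}"
  proof (rule Collect_cong)
    fix x
    show "(\<exists>e. x = f ` e \<and> e \<in> edges H \<and> card (f ` e) = 2) \<longleftrightarrow> (\<exists>e. x = g ` e \<and> e \<in> edges H \<and> card (g ` e) = 2)"
      using ev by metis
  qed
  show ?thesis unfolding Q_def 1 2 ..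
qed

lemma tok_obtainable:
  assumes "obtainable G H" "simple_graph G"
  shows "obtainable (token_graph k G) (token_graph k H)"
  using assms(1)
proof (induction rule: obtainable.induct)
  case refl
  show ?case by (rule obtainable.refl)
next
  case (del_edge H e)
  have sH: "simple_graph H" using obtainable_simple[OF del_edge.hyps(1) assms(2)] .
  show ?case using spanning_sub[OF del_edge.IH tok_simple[OF sH] tok_del_edge[OF sH]] .
next
  case (del_vertex H v)
  have sH: "simple_graph H" using obtainable_simple[OF del_vertex.hyps(1) assms(2)] .
  define D where "D = {A \<in> verts (token_graph k H). v \<in> A}"
  have "finite (verts (token_graph k H))" using tok_simple[OF sH] by (simp add: simple_graph_def)
  then have "finite D" unfolding D_def by simp
  moreover have "D \<subseteq> verts (token_graph k H)" unfolding D_def by blast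
  ultimately have "obtainable (token_graph k G)
      (verts (token_graph k H) - D, {X \<in> edges (token_graph k H). X \<inter> D = {}})"
    using delete_verts del_vertex.IH by blast
  then show ?case using tok_del_vertex[OF sH, of k v] unfolding D_def by simp
next
  case (contract H u v)
  have sH: "simple_graph H" using obtainable_simple[OF contract.hyps(1) assms(2)] .
  define T where "T = token_graph k H"
  define D where "D = {A \<in> verts T. u \<in> A \<and> v \<in> A}"
  define H1 where "H1 = (verts T - D, {X \<in> edges T. X \<inter> D = {}})"
  define f where "f = (\<lambda>A. if v \<in> A \<and> u \<notin> A then insert u (A - {v}) else A)"
  have eq: "token_graph k (contract_edge u v H) = Q f H1"
    unfolding T_def D_def H1_def f_def by (rule tok_contract[OF sH contract.hyps(2,3)])
  have sT: "simple_graph T" unfolding T_def using tok_simple[OF sH] .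
  have fin: "finite (verts H)" and c2: "\<forall>e\<in>edges H. card e = 2"
    using sH by (auto simp: simple_graph_def)
  have uV: "u \<in> verts H" "v \<in> verts H" using sH contract.hyps(2) by (auto simp: simple_graph_def)
  have "finite (verts T)" using sT by (simp add: simple_graph_def)
  then have "finite D" unfolding D_def by simp
  moreover have "D \<subseteq> verts T" unfolding D_def by blast
  ultimately have oH1: "obtainable (token_graph k G) H1"
    unfolding H1_def using delete_verts contract.IH T_def by blast
  have sH1: "simple_graph H1"
    using obtainable_simple[OF oH1 tok_simple[OF assms(2)]] .
  define S where "S = {A \<in> verts H1. v \<in> A}"
  define g where "g = (\<lambda>A. if A \<in> S then f A else A)"
  have VH1: "verts H1 = verts T - D" and EH1: "edges H1 = {X \<in> edges T. X \<inter> D = {}}"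
    by (simp_all add: H1_def verts_def edges_def)
  have VT: "verts T = {A. A \<subseteq> verts H \<and> card A = k}" unfolding T_def by (rule tok_verts)
  have "finite (verts H1)" using sH1 by (simp add: simple_graph_def)
  then have finS: "finite S" unfolding S_def by simp
  have Sprop: "x \<in> verts H1 \<and> g x \<notin> S \<and> g x \<in> verts H1 \<and> {x, g x} \<in> edges H1 \<and> g x \<noteq> x"
    if xS: "x \<in> S" for x
  proof -
    have x: "x \<subseteq> verts H" "card x = k" "v \<in> x" "u \<notin> x" "x \<in> verts H1"
      using xS unfolding S_def VH1 VT D_def by auto
    have gx: "g x = insert u (x - {v})" using xS x(3,4) unfolding g_def f_def by simp
    have finx: "finite x" using x(1) fin finite_subset by blast
    have "card x > 0" using finx x(3) card_gt_0_iff by blast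
    then have "card (g x) = k" unfolding gx using finx x(2,3,4) by (simp add: card_insert_if)
    moreover have "g x \<subseteq> verts H" unfolding gx using x(1) uV by auto
    ultimately have gT: "g x \<in> verts T" unfolding VT by simp
    have vg: "v \<notin> g x" unfolding gx using contract.hyps(3) by simp
    then have "g x \<notin> D" unfolding D_def by simp
    then have gH1: "g x \<in> verts H1" unfolding VH1 using gT by simp
    have "g x \<notin> S" unfolding S_def using vg by simp
    moreover have "{x, g x} \<in> edges H1"
    proof -
      have "{v,u} \<in> edges H" using contract.hyps(2) by (simp add: insert_commute)
      then have "adj2 (edges H) (insert v (x - {v})) (insert u (x - {v}))"
        using x(4) by (intro adj2I) auto
      moreover have "insert v (x - {v}) = x" using x(3) by auto
      ultimately have "adj2 (edges H) x (g x)" unfolding gx by simp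
      then have "{x, g x} \<in> edges T" unfolding T_def
        using tok_edgeI[OF sH, of x k "g x"] x(1,2) gT VT by simp
      moreover have "x \<notin> D" using x(5) unfolding VH1 by simp
      ultimately show ?thesis unfolding EH1 using \<open>g x \<notin> D\<close> by simp
    qed
    moreover have "g x \<noteq> x" unfolding gx using x(4) by auto
    ultimately show ?thesis using x(5) gH1 by blast
  qed
  have gid: "\<forall>x. x \<notin> S \<longrightarrow> g x = x" unfolding g_def by simp
  have "obtainable (token_graph k G) (Q g H1)"
    using contract_many[OF finS oH1 sH1] Sprop gid by blast
  moreover have "Q f H1 = Q g H1"
  proof (rule Q_cong[OF sH1], rule ballI)
    fix x assume x: "x \<in> verts H1"
    show "f x = g x"
    proof (cases "x \<in> S")
      case True then show ?thesis unfolding g_def by simp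
    next
      case False
      then have "v \<notin> x" using x unfolding S_def by simp
      then show ?thesis unfolding g_def f_def by simp
    qed
  qed
  ultimately show ?case using eq by simp
qed

lemma adj2_map:
  assumes "simple_graph G1" "inj_on g (verts G1)"
    "\<forall>x\<in>verts G1. \<forall>y\<in>verts G1. {x, y} \<in> edges G1 \<longleftrightarrow> {g x, g y} \<in> edges G2"
    "A \<subseteq> verts G1" "B \<subseteq> verts G1" "adj2 (edges G1) A B"
  shows "adj2 (edges G2) (g ` A) (g ` B)"
proof -
  obtain C a b where ab: "A = insert a C" "B = insert b C" "a \<notin> C" "b \<notin> C" "{a,b} \<in> edges G1"
    using assms(6) unfolding adj2_def by blast
  have abV: "a \<in> verts G1" "b \<in> verts G1" using assms(1) ab(5) by (auto simp: simple_graph_def)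
  have CV: "C \<subseteq> verts G1" using assms(4) ab(1) by auto
  have "g a \<notin> g ` C" using inj_on_image_mem_iff[OF assms(2) abV(1) CV] ab(3) by simp
  moreover have "g b \<notin> g ` C" using inj_on_image_mem_iff[OF assms(2) abV(2) CV] ab(4) by simp
  moreover have "{g a, g b} \<in> edges G2" using assms(3) abV ab(5) by blast
  ultimately have "adj2 (edges G2) (insert (g a) (g ` C)) (insert (g b) (g ` C))" by (rule adj2I)
  then show ?thesis using ab(1,2) by simp
qed

lemma tok_edge_map:
  assumes "simple_graph G1" "simple_graph G2" "inj_on g (verts G1)" "g ` verts G1 \<subseteq> verts G2"
    "\<forall>x\<in>verts G1. \<forall>y\<in>verts G1. {x, y} \<in> edges G1 \<longleftrightarrow> {g x, g y} \<in> edges G2"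
    "A \<subseteq> verts G1" "B \<subseteq> verts G1" "card A = k" "card B = k"
    "{A,B} \<in> edges (token_graph k G1)"
  shows "{g ` A, g ` B} \<in> edges (token_graph k G2)"
proof -
  obtain A0 B0 where h: "{A,B} = {A0,B0}" "adj2 (edges G1) A0 B0"
    by (rule tok_edgeE[OF assms(1,10)])
  have "adj2 (edges G1) A B" using h by (metis adj2_sym doubleton_eq_iff)
  then have "adj2 (edges G2) (g ` A) (g ` B)" using adj2_map assms by blast
  moreover have "g ` A \<subseteq> verts G2" "g ` B \<subseteq> verts G2" using assms(4,6,7) by auto
  moreover have "card (g ` A) = k" "card (g ` B) = k"
    using assms(3,6,7,8,9) by (simp_all add: card_image inj_on_subset)
  ultimately show ?thesis using tok_edgeI[OF assms(2)] by blast
qed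

lemma tok_iso:
  assumes "graph_iso G1 G2"
  shows "graph_iso (token_graph k G1) (token_graph k G2)"
proof -
  have s1: "simple_graph G1" and s2: "simple_graph G2" using assms by (simp_all add: graph_iso_def)
  obtain g where bij: "bij_betw g (verts G1) (verts G2)"
    and ec: "\<forall>x\<in>verts G1. \<forall>y\<in>verts G1. {x, y} \<in> edges G1 \<longleftrightarrow> {g x, g y} \<in> edges G2"
    using assms unfolding graph_iso_def by blast
  define g' where "g' = the_inv_into (verts G1) g"
  have bij': "bij_betw g' (verts G2) (verts G1)" unfolding g'_def using bij by (rule bij_betw_the_inv_into)
  have inj: "inj_on g (verts G1)" and im: "g ` verts G1 = verts G2" using bij by (auto simp: bij_betw_def)
  have inj': "inj_on g' (verts G2)" and im': "g' ` verts G2 = verts G1" using bij' by (auto simp: bij_betw_def)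
  have gg': "g (g' y) = y" if "y \<in> verts G2" for y
    unfolding g'_def using f_the_inv_into_f_bij_betw[OF bij that] .
  have g'g: "g' (g x) = x" if "x \<in> verts G1" for x
    unfolding g'_def using the_inv_into_f_f[OF inj that] .
  have ec': "\<forall>x\<in>verts G2. \<forall>y\<in>verts G2. {x, y} \<in> edges G2 \<longleftrightarrow> {g' x, g' y} \<in> edges G1"
  proof (intro ballI)
    fix x y assume xy: "x \<in> verts G2" "y \<in> verts G2"
    have "g' x \<in> verts G1" "g' y \<in> verts G1" using im' xy by auto
    then have "{g' x, g' y} \<in> edges G1 \<longleftrightarrow> {g (g' x), g (g' y)} \<in> edges G2" using ec by blast
    then show "{x, y} \<in> edges G2 \<longleftrightarrow> {g' x, g' y} \<in> edges G1" using gg' xy by simp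
  qed
  have g'gA: "g' ` (g ` A) = A" if "A \<subseteq> verts G1" for A
  proof -
    have "g' ` (g ` A) = (\<lambda>x. g' (g x)) ` A" by (simp add: image_image)
    also have "\<dots> = A" using g'g that by (simp add: subset_iff)
    finally show ?thesis .
  qed
  have gg'B: "g ` (g' ` B) = B" if "B \<subseteq> verts G2" for B
  proof -
    have "g ` (g' ` B) = (\<lambda>x. g (g' x)) ` B" by (simp add: image_image)
    also have "\<dots> = B" using gg' that by (simp add: subset_iff)
    finally show ?thesis .
  qed
  have bijT: "bij_betw (\<lambda>A. g ` A) (verts (token_graph k G1)) (verts (token_graph k G2))"
    unfolding bij_betw_def tok_verts
  proof (intro conjI)
    show "inj_on ((`) g) {A. A \<subseteq> verts G1 \<and> card A = k}"
      by (rule inj_onI) (use inj in \<open>simp add: inj_on_image_eq_iff\<close>)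
    show "(`) g ` {A. A \<subseteq> verts G1 \<and> card A = k} = {A. A \<subseteq> verts G2 \<and> card A = k}"
    proof
      show "(`) g ` {A. A \<subseteq> verts G1 \<and> card A = k} \<subseteq> {A. A \<subseteq> verts G2 \<and> card A = k}"
        using inj im by (auto simp: card_image inj_on_subset)
      show "{A. A \<subseteq> verts G2 \<and> card A = k} \<subseteq> (`) g ` {A. A \<subseteq> verts G1 \<and> card A = k}"
      proof
        fix B assume B: "B \<in> {A. A \<subseteq> verts G2 \<and> card A = k}"
        then have "g' ` B \<subseteq> verts G1" "card (g' ` B) = k" using inj' im'
          by (auto simp: card_image inj_on_subset)
        moreover have "B = g ` (g' ` B)" using gg'B B by simp
        ultimately show "B \<in> (`) g ` {A. A \<subseteq> verts G1 \<and> card A = k}" by blast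
      qed
    qed
  qed
  have ecT: "\<forall>A\<in>verts (token_graph k G1). \<forall>B\<in>verts (token_graph k G1).
      {A, B} \<in> edges (token_graph k G1) \<longleftrightarrow> {g ` A, g ` B} \<in> edges (token_graph k G2)"
  proof (intro ballI iffI)
    fix A B assume A: "A \<in> verts (token_graph k G1)" and B: "B \<in> verts (token_graph k G1)"
    then have AB: "A \<subseteq> verts G1" "card A = k" "B \<subseteq> verts G1" "card B = k" unfolding tok_verts by auto
    {
      assume "{A, B} \<in> edges (token_graph k G1)"
      then show "{g ` A, g ` B} \<in> edges (token_graph k G2)"
        using tok_edge_map[OF s1 s2 inj _ ec AB(1,3,2,4)] im by blast
    next
      assume e: "{g ` A, g ` B} \<in> edges (token_graph k G2)"
      have "g ` A \<subseteq> verts G2" "g ` B \<subseteq> verts G2" using AB im by auto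
      moreover have "card (g ` A) = k" "card (g ` B) = k"
        using AB inj by (simp_all add: card_image inj_on_subset)
      ultimately have "{g' ` g ` A, g' ` g ` B} \<in> edges (token_graph k G1)"
        using tok_edge_map[OF s2 s1 inj' _ ec' _ _ _ _ e] im' by blast
      then show "{A, B} \<in> edges (token_graph k G1)" using g'gA AB by simp
    }
  qed
  show ?thesis unfolding graph_iso_def using tok_simple[OF s1] tok_simple[OF s2] bijT ecT by blast
qed

theorem lemma5:
  fixes G :: "'a graph" and G' :: "'b graph" and k :: nat
  assumes "simple_graph G"
    and "minor G' G"
    and "1 \<le> k" and "k < card (verts G')"
  shows "minor (token_graph k G') (token_graph k G)"
proof -
  obtain G0 where "obtainable G G0" "graph_iso G' G0" using assms(2) unfolding minor_def by blast
  then show ?thesis unfolding minor_def using tok_obtainable[OF _ assms(1)] tok_iso by blast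
qed

end
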